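(* For all integers $\alpha\ge2$, $0\le m\le\alpha$ and $n\in\mathbb Z$, $$C_{\alpha,m,n}=C_{\alpha-1,m,n}+y_{2\alpha-1,n}\,C_{\alpha-1,m-1,n}+y_{2\alpha-2,n}\,C_{\alpha-2,m-1,n}.$$ Moreover $C_{\alpha,0,n}=1$ for all $\alpha\ge0$.
   Context: Let $(r_{1,n})_{n\in\mathbb Z}$ be a sequence in a field $K$, set $r_{0,n}=1$ and $r_{\alpha,n}=\det_{1\le i,j\le\alpha}(r_{1,n+i+j-1-\alpha})$ for $\alpha\ge1$, and assume all $r_{\alpha,n}$ are nonzero. For $p\ge0$ let $s_p(j)=j$ if $j\le p$ and $s_p(j)=j+1$ if $j>p$; for $\alpha\ge1$, $0\le m\le \alpha$ let $c_{\alpha,m,n}=\det_{1\le i,j\le\alpha}(r_{1,n+i+s_{\alpha-m}(j)-\alpha-1})$, $c_{0,0,n}=1$, and $c_{\alpha,m,n}=0$ if $m<0$ or $m>\alpha$. Define $v_{\alpha,n}=r_{\alpha,n}/r_{\alpha-1,n}$ ($\alpha\ge1$), the weights $$y_{2\alpha-1,n}=\frac{v_{\alpha,n+1}}{v_{\alpha,n}}=\frac{r_{\alpha-1,n}r_{\alpha,n+1}}{r_{\alpha,n}r_{\alpha-1,n+1}},\qquad y_{2\alpha,n}=\frac{v_{\alpha+1,n+1}}{v_{\alpha,n}}=\frac{r_{\alpha-1,n}r_{\alpha+1,n+1}}{r_{\alpha,n}r_{\alpha,n+1}}\quad(\alpha\ge1),$$ and $C_{\alpha,m,n}=c_{\alpha,m,n}/(v_{1,n}v_{2,n}\cdots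 v_{\alpha,n})$ (with $C_{0,0,n}=1$ and $C_{\alpha,m,n}=0$ if $m<0$ or $m>\alpha$). *)

theory Defs
  imports "Jordan_Normal_Form.Determinant"
begin

text \<open>Hankel-type determinants. Matrices are 0-indexed in JNF; the paper's
  index i (1..alpha) corresponds to i'+1.\<close>

definition s_idx :: "nat \<Rightarrow> nat \<Rightarrow> nat" where
  "s_idx p j = (if j \<le> p then j else j + 1)"

definition rdet :: "(int \<Rightarrow> 'a::field) \<Rightarrow> nat \<Rightarrow> int \<Rightarrow> 'a" where
  "rdet r1 \<alpha> n = (if \<alpha> = 0 then 1 else
     det (mat \<alpha> \<alpha> (\<lambda>(i,j). r1 (n + int (i+1) + int (j+1) - 1 - int \<alpha>))))"

definition cdet :: "(int \<Rightarrow> 'a::field) \<Rightarrow> nat \<Rightarrow> int \<Rightarrow> int \<Rightarrow> 'a" where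
  "cdet r1 \<alpha> m n = (if m < 0 \<or> m > int \<alpha> then 0
     else if \<alpha> = 0 then 1
     else det (mat \<alpha> \<alpha> (\<lambda>(i,j). r1 (n + int (i+1)
              + int (s_idx (\<alpha> - nat m) (j+1)) - int \<alpha> - 1))))"

definition vq :: "(int \<Rightarrow> 'a::field) \<Rightarrow> nat \<Rightarrow> int \<Rightarrow> 'a" where
  "vq r1 \<alpha> n = rdet r1 \<alpha> n / rdet r1 (\<alpha> - 1) n"

(* y_{2a-1,n} = v_{a,n+1}/v_{a,n},  y_{2a,n} = v_{a+1,n+1}/v_{a,n}  (a >= 1) *)
definition yw :: "(int \<Rightarrow> 'a::field) \<Rightarrow> nat \<Rightarrow> int \<Rightarrow> 'a" where
  "yw r1 k n = (if odd k then vq r1 ((k+1) div 2) (n+1) / vq r1 ((k+1) div 2) n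
                else vq r1 (k div 2 + 1) (n+1) / vq r1 (k div 2) n)"

definition Cn :: "(int \<Rightarrow> 'a::field) \<Rightarrow> nat \<Rightarrow> int \<Rightarrow> int \<Rightarrow> 'a" where
  "Cn r1 \<alpha> m n = cdet r1 \<alpha> m n / (\<Prod>k=1..\<alpha>. vq r1 k n)"

end

theory Submission
  imports Defs
begin

definition cof :: "(nat \<Rightarrow> nat \<Rightarrow> 'a::comm_ring_1) \<Rightarrow> nat \<Rightarrow> (nat \<Rightarrow> 'a) \<Rightarrow> 'a" where
  "cof W \<beta> x = (\<Sum>i<\<beta>. (-1)^i * x i * det (mat (\<beta>-1) (\<beta>-1) (\<lambda>(i',t). W (insert_index i i') t)))"

definition insm :: "nat \<Rightarrow> (nat \<Rightarrow> nat \<Rightarrow> 'a) \<Rightarrow> nat \<Rightarrow> (nat \<Rightarrow> 'a) \<Rightarrow> 'a mat" where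
  "insm \<beta> W p x = mat \<beta> \<beta> (\<lambda>(i,t). if t < p then W i t else if t = p then x i else W i (t - 1))"

lemma det_insm:
  fixes W :: "nat \<Rightarrow> nat \<Rightarrow> 'a::comm_ring_1"
  assumes p: "p < \<beta>"
  shows "det (insm \<beta> W p x) = (-1)^p * cof W \<beta> x"
proof -
  have A: "insm \<beta> W p x \<in> carrier_mat \<beta> \<beta>" by (simp add: insm_def)
  have "det (insm \<beta> W p x) = (\<Sum>i<\<beta>. insm \<beta> W p x $$ (i,p) * cofactor (insm \<beta> W p x) i p)"
    by (rule laplace_expansion_column[OF A p])
  also have "\<dots> = (\<Sum>i<\<beta>. (-1)^p * ((-1)^i * x i * det (mat (\<beta>-1) (\<beta>-1) (\<lambda>(i',t). W (insert_index i i') t))))"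
  proof (rule sum.cong[OF refl])
    fix i assume i: "i \<in> {..<\<beta>}"
    have md: "mat_delete (insm \<beta> W p x) i p = mat (\<beta>-1) (\<beta>-1) (\<lambda>(i',t). W (insert_index i i') t)"
      by (rule eq_matI) (auto simp: mat_delete_def insm_def insert_index_def)
    show "insm \<beta> W p x $$ (i,p) * cofactor (insm \<beta> W p x) i p = (-1)^p * ((-1)^i * x i * det (mat (\<beta>-1) (\<beta>-1) (\<lambda>(i',t). W (insert_index i i') t)))"
      unfolding cofactor_def md using i p by (simp add: insm_def power_add)
  qed
  also have "\<dots> = (-1)^p * cof W \<beta> x" unfolding cof_def by (simp add: sum_distrib_left)
  finally show ?thesis .
qed

lemma cof_zero:
  fixes W :: "nat \<Rightarrow> nat \<Rightarrow> 'a::comm_ring_1"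
  assumes tz: "tz < \<beta> - 1" and x: "\<And>i. i < \<beta> \<Longrightarrow> x i = W i tz"
  shows "cof W \<beta> x = 0"
proof -
  have b: "0 < \<beta>" using tz by auto
  have "det (insm \<beta> W 0 x) = 0"
  proof (rule det_identical_columns[of _ \<beta> 0 "Suc tz"])
    show "insm \<beta> W 0 x \<in> carrier_mat \<beta> \<beta>" by (simp add: insm_def)
    show "col (insm \<beta> W 0 x) 0 = col (insm \<beta> W 0 x) (Suc tz)"
      using tz x by (auto simp: insm_def intro!: eq_vecI)
  qed (use tz in auto)
  then show ?thesis using det_insm[OF b, of W x] by simp
qed

lemma cramer_rel:
  fixes X :: "nat \<Rightarrow> nat \<Rightarrow> 'a::comm_ring_1"
  assumes i0: "i0 < \<beta>"
  shows "(\<Sum>j\<le>\<beta>. (-1)^j * X i0 j * det (mat \<beta> \<beta> (\<lambda>(i,t). X i (insert_index j t)))) = 0"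
proof -
  define N where "N = mat (Suc \<beta>) (Suc \<beta>) (\<lambda>(i,j). if i = 0 then X i0 j else X (i-1) j)"
  have A: "N \<in> carrier_mat (Suc \<beta>) (Suc \<beta>)" by (simp add: N_def)
  have "det N = 0"
    by (rule det_identical_rows[OF A, of 0 "Suc i0"]) (use i0 in \<open>auto simp: N_def intro!: eq_vecI\<close>)
  moreover have "det N = (\<Sum>j<Suc \<beta>. N $$ (0,j) * cofactor N 0 j)"
    by (rule laplace_expansion_row[OF A]) simp
  moreover have "\<dots> = (\<Sum>j\<le>\<beta>. (-1)^j * X i0 j * det (mat \<beta> \<beta> (\<lambda>(i,t). X i (insert_index j t))))"
    unfolding lessThan_Suc_atMost[symmetric]
  proof (rule sum.cong[OF refl])
    fix j assume j: "j \<in> {..<Suc \<beta>}"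
    have md: "mat_delete N 0 j = mat \<beta> \<beta> (\<lambda>(i,t). X i (insert_index j t))"
      by (rule eq_matI) (auto simp: mat_delete_def N_def insert_index_def)
    show "N $$ (0,j) * cofactor N 0 j = (-1)^j * X i0 j * det (mat \<beta> \<beta> (\<lambda>(i,t). X i (insert_index j t)))"
      unfolding cofactor_def md using j by (simp add: N_def)
  qed
  ultimately show ?thesis by simp
qed

lemma cramer_cof:
  fixes X :: "nat \<Rightarrow> nat \<Rightarrow> 'a::comm_ring_1"
  assumes g: "\<And>i. i < \<gamma> \<Longrightarrow> g i < \<beta>"
  shows "(\<Sum>j\<le>\<beta>. (-1)^j * det (mat \<beta> \<beta> (\<lambda>(i,t). X i (insert_index j t))) * cof W \<gamma> (\<lambda>i. X (g i) j)) = 0"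
proof -
  define D where "D j = det (mat \<beta> \<beta> (\<lambda>(i,t). X i (insert_index j t)))" for j
  define E where "E i = det (mat (\<gamma>-1) (\<gamma>-1) (\<lambda>(i',t). W (insert_index i i') t))" for i
  have "(\<Sum>j\<le>\<beta>. (-1)^j * D j * cof W \<gamma> (\<lambda>i. X (g i) j))
      = (\<Sum>j\<le>\<beta>. \<Sum>i<\<gamma>. (-1)^i * E i * ((-1)^j * X (g i) j * D j))"
    unfolding cof_def E_def[symmetric] by (simp add: sum_distrib_left algebra_simps)
  also have "\<dots> = (\<Sum>i<\<gamma>. (-1)^i * E i * (\<Sum>j\<le>\<beta>. (-1)^j * X (g i) j * D j))"
    by (subst sum.swap) (simp add: sum_distrib_left)
  also have "\<dots> = 0"
    using cramer_rel[OF g, of _ X] unfolding D_def by simp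
  finally show ?thesis unfolding D_def .
qed


definition Mh :: "(int \<Rightarrow> 'a::field) \<Rightarrow> nat \<Rightarrow> int \<Rightarrow> nat \<Rightarrow> nat \<Rightarrow> 'a" where
  "Mh r1 \<alpha> n i j = r1 (n + int i + int j + 1 - int \<alpha>)"

lemma s_idx_Suc: "s_idx p (Suc t) = Suc (insert_index p t)"
  by (simp add: s_idx_def insert_index_def)

lemma cdet_top:
  assumes "0 < \<alpha>" "k \<le> \<alpha>"
  shows "cdet r1 \<alpha> (int \<alpha> - int k) n = det (mat \<alpha> \<alpha> (\<lambda>(i,t). Mh r1 \<alpha> n i (insert_index k t)))"
proof -
  have "nat (int \<alpha> - int k) = \<alpha> - k" using assms by auto
  hence e: "\<alpha> - nat (int \<alpha> - int k) = k" using assms by auto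
  show ?thesis using assms unfolding cdet_def e
    by (auto simp: s_idx_Suc Mh_def intro!: arg_cong[where f=det] eq_matI arg_cong[where f=r1])
qed

lemma rdet_top: "0 < \<alpha> \<Longrightarrow> rdet r1 \<alpha> n = det (mat \<alpha> \<alpha> (\<lambda>(i,t). Mh r1 \<alpha> n i (insert_index \<alpha> t)))"
  unfolding rdet_def
  by (auto simp: Mh_def insert_index_def intro!: arg_cong[where f=det] eq_matI arg_cong[where f=r1])

lemma rdet_top1: "0 < \<alpha> \<Longrightarrow> rdet r1 \<alpha> (n+1) = det (mat \<alpha> \<alpha> (\<lambda>(i,t). Mh r1 \<alpha> n i (insert_index 0 t)))"
  unfolding rdet_def
  by (auto simp: Mh_def insert_index_def intro!: arg_cong[where f=det] eq_matI arg_cong[where f=r1])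


definition Wr :: "(int \<Rightarrow> 'a::field) \<Rightarrow> nat \<Rightarrow> int \<Rightarrow> nat \<Rightarrow> nat \<Rightarrow> nat \<Rightarrow> nat \<Rightarrow> 'a" where
  "Wr r1 \<alpha> n k s i t = Mh r1 \<alpha> n (i+s) (insert_index (k-1) t + 1)"

lemma sum3:
  fixes f :: "nat \<Rightarrow> 'a::comm_monoid_add"
  assumes "0<k" "k<\<alpha>" "\<And>j. j\<le>\<alpha> \<Longrightarrow> j\<noteq>0 \<Longrightarrow> j\<noteq>k \<Longrightarrow> j\<noteq>\<alpha> \<Longrightarrow> f j = 0"
  shows "(\<Sum>j\<le>\<alpha>. f j) = f 0 + f k + f \<alpha>"
proof -
  have "(\<Sum>j\<le>\<alpha>. f j) = (\<Sum>j\<in>{0,k,\<alpha>}. f j)"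
    by (rule sum.mono_neutral_right) (use assms in auto)
  also have "\<dots> = f 0 + f k + f \<alpha>" using assms by (simp add: add.assoc)
  finally show ?thesis .
qed

lemma cof_e0: "0 < \<beta> \<Longrightarrow> cof W \<beta> (\<lambda>i. if i = 0 then 1 else 0) = det (mat (\<beta>-1) (\<beta>-1) (\<lambda>(i',t). W (Suc i') t))"
proof -
  assume b: "0 < \<beta>"
  have "cof W \<beta> (\<lambda>i. if i = 0 then 1 else 0) = (\<Sum>i\<in>{0}. (-1)^i * (if i = 0 then 1 else 0) * det (mat (\<beta>-1) (\<beta>-1) (\<lambda>(i',t). W (insert_index i i') t)))"
    unfolding cof_def by (rule sum.mono_neutral_right) (use b in auto)
  also have "\<dots> = det (mat (\<beta>-1) (\<beta>-1) (\<lambda>(i',t). W (Suc i') t))"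
    by (simp add: insert_index_def)
  finally show ?thesis .
qed

lemma cof_via_insm: "p < \<beta> \<Longrightarrow> cof W \<beta> x = (-1)^p * det (insm \<beta> W p x)"
  by (simp add: det_insm)

context
  fixes r1 :: "int \<Rightarrow> 'a::field" and \<alpha> k :: nat and n :: int
  assumes a2: "2 \<le> \<alpha>" and k1: "1 \<le> k" and ka: "k < \<alpha>"
begin

lemma id_c: "cdet r1 (\<alpha>-1) (int \<alpha> - int k - 1) n = det (insm (\<alpha>-1) (Wr r1 \<alpha> n k 1) 0 (\<lambda>i. Mh r1 \<alpha> n (Suc i) 0))"
proof -
  have "nat (int \<alpha> - int k - 1) = \<alpha> - k - 1" using a2 k1 ka by auto
  hence e: "(\<alpha>-1) - nat (int \<alpha> - int k - 1) = k" using a2 k1 ka by auto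
  show ?thesis using a2 k1 ka unfolding cdet_def e
    by (auto simp: s_idx_def insm_def Wr_def Mh_def insert_index_def intro!: arg_cong[where f=det] eq_matI arg_cong[where f=r1])
qed

lemma id_e: "rdet r1 (\<alpha>-1) (n+1) = det (insm (\<alpha>-1) (Wr r1 \<alpha> n k 1) (k-1) (\<lambda>i. Mh r1 \<alpha> n (Suc i) k))"
  using a2 k1 ka unfolding rdet_def
  by (auto simp: insm_def Wr_def Mh_def insert_index_def intro!: arg_cong[where f=det] eq_matI arg_cong[where f=r1])

lemma id_e2: "rdet r1 (\<alpha>-1) (n+1) = det (mat (\<alpha>-1) (\<alpha>-1) (\<lambda>(i',t). Mh r1 \<alpha> n (Suc i') (insert_index \<alpha> (Suc t))))"
  using a2 k1 ka unfolding rdet_def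
  by (auto simp: Mh_def insert_index_def intro!: arg_cong[where f=det] eq_matI arg_cong[where f=r1])

lemma id_a: "det (insm (\<alpha>-1) (Wr r1 \<alpha> n k 1) (\<alpha>-2) (\<lambda>i. Mh r1 \<alpha> n (Suc i) \<alpha>))
   = det (mat (\<alpha>-1) (\<alpha>-1) (\<lambda>(i',t). Mh r1 \<alpha> n (Suc i') (insert_index k (Suc t))))"
  using a2 k1 ka
  by (auto simp: insm_def Wr_def Mh_def insert_index_def intro!: arg_cong[where f=det] eq_matI arg_cong[where f=r1])

lemma id_f: "rdet r1 (\<alpha>-1) n = det (insm (\<alpha>-1) (Wr r1 \<alpha> n k 0) (k-1) (\<lambda>i. Mh r1 \<alpha> n i k))"
  using a2 k1 ka unfolding rdet_def
  by (auto simp: insm_def Wr_def Mh_def insert_index_def intro!: arg_cong[where f=det] eq_matI arg_cong[where f=r1])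

lemma id_d: "cdet r1 (\<alpha>-1) (int \<alpha> - int k) n = det (insm (\<alpha>-1) (Wr r1 \<alpha> n k 0) (\<alpha>-2) (\<lambda>i. Mh r1 \<alpha> n i \<alpha>))"
proof -
  have "nat (int \<alpha> - int k) = \<alpha> - k" using a2 k1 ka by auto
  hence e: "(\<alpha>-1) - nat (int \<alpha> - int k) = k - 1" using a2 k1 ka by auto
  show ?thesis using a2 k1 ka unfolding cdet_def e
    by (auto simp: s_idx_def insm_def Wr_def Mh_def insert_index_def intro!: arg_cong[where f=det] eq_matI arg_cong[where f=r1])
qed

lemma id_Dc: "cdet r1 (\<alpha>-2) (int \<alpha> - int k - 1) n = cof (Wr r1 \<alpha> n k 0) (\<alpha>-1) (\<lambda>i. if i = 0 then 1 else 0)"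
proof -
  have c: "cof (Wr r1 \<alpha> n k 0) (\<alpha>-1) (\<lambda>i. if i = 0 then 1 else 0) = det (mat (\<alpha>-2) (\<alpha>-2) (\<lambda>(i',t). Wr r1 \<alpha> n k 0 (Suc i') t))"
    using cof_e0[of "\<alpha>-1"] a2 by (simp add: numeral_2_eq_2)
  show ?thesis
  proof (cases "\<alpha> = 2")
    case True
    then show ?thesis unfolding c cdet_def using k1 ka by auto
  next
    case False
    have "nat (int \<alpha> - int k - 1) = \<alpha> - k - 1" using a2 k1 ka by auto
    hence e: "(\<alpha>-2) - nat (int \<alpha> - int k - 1) = k - 1" using a2 k1 ka by auto
    show ?thesis using False a2 k1 ka unfolding c cdet_def e
      by (auto simp: s_idx_def Wr_def Mh_def insert_index_def intro!: arg_cong[where f=det] eq_matI arg_cong[where f=r1])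
  qed
qed

end

lemma sgn1: "1 \<le> k \<Longrightarrow> (-1::'a::comm_ring_1)^k * (-1)^(k-1) = -1"
  by (cases k) auto
lemma sgn2: "2 \<le> k \<Longrightarrow> (-1::'a::comm_ring_1)^k * (-1)^(k-2) = 1"
proof -
  assume "2 \<le> k" then obtain q where "k = Suc (Suc q)" by (metis add_2_eq_Suc le_Suc_ex)
  then show ?thesis by simp
qed

context
  fixes r1 :: "int \<Rightarrow> 'a::field" and \<alpha> k :: nat and n :: int
  assumes a2: "2 \<le> \<alpha>" and k1: "1 \<le> k" and ka: "k < \<alpha>"
begin

definition "Dm j = det (mat \<alpha> \<alpha> (\<lambda>(i,t). Mh r1 \<alpha> n i (insert_index j t)))"

lemma plP:
  "Dm 0 * det (insm (\<alpha>-1) (Wr r1 \<alpha> n k 1) 0 (\<lambda>i. Mh r1 \<alpha> n (Suc i) 0))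
   - Dm k * det (insm (\<alpha>-1) (Wr r1 \<alpha> n k 1) (k-1) (\<lambda>i. Mh r1 \<alpha> n (Suc i) k))
   + Dm \<alpha> * det (insm (\<alpha>-1) (Wr r1 \<alpha> n k 1) (\<alpha>-2) (\<lambda>i. Mh r1 \<alpha> n (Suc i) \<alpha>)) = 0"
proof -
  let ?W = "Wr r1 \<alpha> n k 1"
  let ?f = "\<lambda>j. (-1)^j * Dm j * cof ?W (\<alpha>-1) (\<lambda>i. Mh r1 \<alpha> n (Suc i) j)"
  have S: "(\<Sum>j\<le>\<alpha>. ?f j) = 0"
    unfolding Dm_def by (rule cramer_cof) auto
  have Z: "?f j = 0" if j: "j\<le>\<alpha>" "j\<noteq>0" "j\<noteq>k" "j\<noteq>\<alpha>" for j
  proof -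
    have "cof ?W (\<alpha>-1) (\<lambda>i. Mh r1 \<alpha> n (Suc i) j) = 0"
      by (rule cof_zero[where tz="if j<k then j-1 else j-2"])
         (use j k1 ka a2 in \<open>auto simp: Wr_def insert_index_def Mh_def intro!: arg_cong[where f=r1]\<close>)
    then show ?thesis by simp
  qed
  have "(\<Sum>j\<le>\<alpha>. ?f j) = ?f 0 + ?f k + ?f \<alpha>"
    by (rule sum3) (use Z k1 ka in auto)
  also have "?f k = - (Dm k * det (insm (\<alpha>-1) ?W (k-1) (\<lambda>i. Mh r1 \<alpha> n (Suc i) k)))"
  proof -
    have ck: "cof ?W (\<alpha>-1) (\<lambda>i. Mh r1 \<alpha> n (Suc i) k) = (-1)^(k-1) * det (insm (\<alpha>-1) ?W (k-1) (\<lambda>i. Mh r1 \<alpha> n (Suc i) k))"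
      by (rule cof_via_insm) (use k1 ka in simp)
    have "?f k = ((-1)^k * (-1)^(k-1)) * (Dm k * det (insm (\<alpha>-1) ?W (k-1) (\<lambda>i. Mh r1 \<alpha> n (Suc i) k)))"
      by (simp only: ck mult_ac)
    then show ?thesis by (simp only: sgn1[OF k1] mult_minus1)
  qed
  also have "?f \<alpha> = Dm \<alpha> * det (insm (\<alpha>-1) ?W (\<alpha>-2) (\<lambda>i. Mh r1 \<alpha> n (Suc i) \<alpha>))"
  proof -
    have ck: "cof ?W (\<alpha>-1) (\<lambda>i. Mh r1 \<alpha> n (Suc i) \<alpha>) = (-1)^(\<alpha>-2) * det (insm (\<alpha>-1) ?W (\<alpha>-2) (\<lambda>i. Mh r1 \<alpha> n (Suc i) \<alpha>))"
      by (rule cof_via_insm) (use a2 in simp)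
    have "?f \<alpha> = ((-1)^\<alpha> * (-1)^(\<alpha>-2)) * (Dm \<alpha> * det (insm (\<alpha>-1) ?W (\<alpha>-2) (\<lambda>i. Mh r1 \<alpha> n (Suc i) \<alpha>)))"
      by (simp only: ck mult_ac)
    then show ?thesis by (simp only: sgn2[OF a2] mult_1)
  qed
  also have "?f 0 = Dm 0 * det (insm (\<alpha>-1) ?W 0 (\<lambda>i. Mh r1 \<alpha> n (Suc i) 0))"
  proof -
    have ck: "cof ?W (\<alpha>-1) (\<lambda>i. Mh r1 \<alpha> n (Suc i) 0) = (-1)^0 * det (insm (\<alpha>-1) ?W 0 (\<lambda>i. Mh r1 \<alpha> n (Suc i) 0))"
      by (rule cof_via_insm) (use a2 in simp)
    show ?thesis unfolding ck by simp
  qed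
  finally show ?thesis using S by simp
qed

lemma detX:
  assumes j: "1 \<le> j"
  shows "det (mat \<alpha> \<alpha> (\<lambda>(i,t). if insert_index j t = 0 then (if i = 0 then 1 else 0) else Mh r1 \<alpha> n i (insert_index j t)))
     = det (mat (\<alpha>-1) (\<alpha>-1) (\<lambda>(i',t). Mh r1 \<alpha> n (Suc i') (insert_index j (Suc t))))"
proof -
  let ?V = "\<lambda>i t. Mh r1 \<alpha> n i (insert_index j (Suc t))"
  have "mat \<alpha> \<alpha> (\<lambda>(i,t). if insert_index j t = 0 then (if i = 0 then 1 else 0) else Mh r1 \<alpha> n i (insert_index j t))
      = insm \<alpha> ?V 0 (\<lambda>i. if i = 0 then 1 else 0)"
    using j by (auto simp: insm_def insert_index_def intro!: eq_matI)
  moreover have "det (insm \<alpha> ?V 0 (\<lambda>i. if i = 0 then 1 else 0)) = cof ?V \<alpha> (\<lambda>i. if i = 0 then 1 else 0)"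
    using det_insm[of 0 \<alpha>] a2 by simp
  moreover have "\<dots> = det (mat (\<alpha>-1) (\<alpha>-1) (\<lambda>(i',t). ?V (Suc i') t))"
    by (rule cof_e0) (use a2 in simp)
  ultimately show ?thesis by simp
qed

lemma pl3:
  "Dm 0 * cof (Wr r1 \<alpha> n k 0) (\<alpha>-1) (\<lambda>i. if i = 0 then 1 else 0)
   - det (mat (\<alpha>-1) (\<alpha>-1) (\<lambda>(i',t). Mh r1 \<alpha> n (Suc i') (insert_index k (Suc t))))
       * det (insm (\<alpha>-1) (Wr r1 \<alpha> n k 0) (k-1) (\<lambda>i. Mh r1 \<alpha> n i k))
   + det (mat (\<alpha>-1) (\<alpha>-1) (\<lambda>(i',t). Mh r1 \<alpha> n (Suc i') (insert_index \<alpha> (Suc t))))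
       * det (insm (\<alpha>-1) (Wr r1 \<alpha> n k 0) (\<alpha>-2) (\<lambda>i. Mh r1 \<alpha> n i \<alpha>)) = 0"
proof -
  let ?W = "Wr r1 \<alpha> n k 0"
  let ?X = "\<lambda>i j. if j = 0 then (if i = 0 then 1 else 0) else Mh r1 \<alpha> n i j"
  let ?f = "\<lambda>j. (-1)^j * det (mat \<alpha> \<alpha> (\<lambda>(i,t). ?X i (insert_index j t))) * cof ?W (\<alpha>-1) (\<lambda>i. ?X i j)"
  have S: "(\<Sum>j\<le>\<alpha>. ?f j) = 0"
    using cramer_cof[of "\<alpha>-1" "\<lambda>i. i" \<alpha> ?X ?W] by auto
  have Z: "?f j = 0" if j: "j\<le>\<alpha>" "j\<noteq>0" "j\<noteq>k" "j\<noteq>\<alpha>" for j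
  proof -
    have "cof ?W (\<alpha>-1) (\<lambda>i. ?X i j) = 0"
      by (rule cof_zero[where tz="if j<k then j-1 else j-2"])
         (use j k1 ka a2 in \<open>auto simp: Wr_def insert_index_def Mh_def intro!: arg_cong[where f=r1]\<close>)
    then show ?thesis by simp
  qed
  have "(\<Sum>j\<le>\<alpha>. ?f j) = ?f 0 + ?f k + ?f \<alpha>"
    by (rule sum3) (use Z k1 ka in auto)
  also have "?f 0 = Dm 0 * cof ?W (\<alpha>-1) (\<lambda>i. if i = 0 then 1 else 0)"
  proof -
    have "mat \<alpha> \<alpha> (\<lambda>(i,t). ?X i (insert_index 0 t)) = mat \<alpha> \<alpha> (\<lambda>(i,t). Mh r1 \<alpha> n i (insert_index 0 t))"
      by (auto simp: insert_index_def intro!: eq_matI)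
    then show ?thesis unfolding Dm_def by simp
  qed
  also have "?f k = - (det (mat (\<alpha>-1) (\<alpha>-1) (\<lambda>(i',t). Mh r1 \<alpha> n (Suc i') (insert_index k (Suc t))))
       * det (insm (\<alpha>-1) ?W (k-1) (\<lambda>i. Mh r1 \<alpha> n i k)))"
  proof -
    have ck: "cof ?W (\<alpha>-1) (\<lambda>i. if k = 0 then (if i = 0 then 1 else 0) else Mh r1 \<alpha> n i k) = (-1)^(k-1) * det (insm (\<alpha>-1) ?W (k-1) (\<lambda>i. Mh r1 \<alpha> n i k))"
      using k1 ka by (subst cof_via_insm[of "k-1"]) auto
    have "?f k = ((-1)^k * (-1)^(k-1)) * (det (mat (\<alpha>-1) (\<alpha>-1) (\<lambda>(i',t). Mh r1 \<alpha> n (Suc i') (insert_index k (Suc t))))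
       * det (insm (\<alpha>-1) ?W (k-1) (\<lambda>i. Mh r1 \<alpha> n i k)))"
      by (simp only: ck detX[OF k1] mult_ac)
    then show ?thesis by (simp only: sgn1[OF k1] mult_minus1)
  qed
  also have "?f \<alpha> = det (mat (\<alpha>-1) (\<alpha>-1) (\<lambda>(i',t). Mh r1 \<alpha> n (Suc i') (insert_index \<alpha> (Suc t))))
       * det (insm (\<alpha>-1) ?W (\<alpha>-2) (\<lambda>i. Mh r1 \<alpha> n i \<alpha>))"
  proof -
    have a1: "1 \<le> \<alpha>" using a2 by simp
    have ck: "cof ?W (\<alpha>-1) (\<lambda>i. if \<alpha> = 0 then (if i = 0 then 1 else 0) else Mh r1 \<alpha> n i \<alpha>) = (-1)^(\<alpha>-2) * det (insm (\<alpha>-1) ?W (\<alpha>-2) (\<lambda>i. Mh r1 \<alpha> n i \<alpha>))"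
      using a2 by (subst cof_via_insm[of "\<alpha>-2"]) auto
    have "?f \<alpha> = ((-1)^\<alpha> * (-1)^(\<alpha>-2)) * (det (mat (\<alpha>-1) (\<alpha>-1) (\<lambda>(i',t). Mh r1 \<alpha> n (Suc i') (insert_index \<alpha> (Suc t))))
       * det (insm (\<alpha>-1) ?W (\<alpha>-2) (\<lambda>i. Mh r1 \<alpha> n i \<alpha>)))"
      by (simp only: ck detX[OF a1] mult_ac)
    then show ?thesis by (simp only: sgn2[OF a2] mult_1)
  qed
  finally show ?thesis using S by simp
qed

end

lemma poly_id:
  fixes r1 :: "int \<Rightarrow> 'a::field"
  assumes a2: "2 \<le> \<alpha>" and k1: "1 \<le> k" and ka: "k < \<alpha>"
  shows "rdet r1 (\<alpha>-1) n * rdet r1 (\<alpha>-1) (n+1) * cdet r1 \<alpha> (int \<alpha> - int k) n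
    = rdet r1 \<alpha> n * rdet r1 (\<alpha>-1) (n+1) * cdet r1 (\<alpha>-1) (int \<alpha> - int k) n
    + rdet r1 (\<alpha>-1) n * rdet r1 \<alpha> (n+1) * cdet r1 (\<alpha>-1) (int \<alpha> - int k - 1) n
    + rdet r1 \<alpha> n * rdet r1 \<alpha> (n+1) * cdet r1 (\<alpha>-2) (int \<alpha> - int k - 1) n"
proof -
  have a0: "0 < \<alpha>" using a2 by simp
  note P = plP[OF a2 k1 ka, of r1 n]
  note Q = pl3[OF a2 k1 ka, of r1 n]
  have K: "cdet r1 \<alpha> (int \<alpha> - int k) n = Dm r1 \<alpha> n k"
    unfolding Dm_def[OF a2 k1 ka] using cdet_top[OF a0, of k r1 n] ka by simp
  have A: "rdet r1 \<alpha> n = Dm r1 \<alpha> n \<alpha>"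
    unfolding Dm_def[OF a2 k1 ka] by (rule rdet_top[OF a0])
  have Z: "rdet r1 \<alpha> (n+1) = Dm r1 \<alpha> n 0"
    unfolding Dm_def[OF a2 k1 ka] by (rule rdet_top1[OF a0])
  have P': "rdet r1 \<alpha> (n+1) * cdet r1 (\<alpha>-1) (int \<alpha> - int k - 1) n - cdet r1 \<alpha> (int \<alpha> - int k) n * rdet r1 (\<alpha>-1) (n+1)
     + rdet r1 \<alpha> n * det (insm (\<alpha>-1) (Wr r1 \<alpha> n k 1) (\<alpha>-2) (\<lambda>i. Mh r1 \<alpha> n (Suc i) \<alpha>)) = 0"
    using P[folded K A Z id_c[OF a2 k1 ka] id_e[OF a2 k1 ka]] .
  have Q': "rdet r1 \<alpha> (n+1) * cdet r1 (\<alpha>-2) (int \<alpha> - int k - 1) n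
     - det (insm (\<alpha>-1) (Wr r1 \<alpha> n k 1) (\<alpha>-2) (\<lambda>i. Mh r1 \<alpha> n (Suc i) \<alpha>)) * rdet r1 (\<alpha>-1) n
     + rdet r1 (\<alpha>-1) (n+1) * cdet r1 (\<alpha>-1) (int \<alpha> - int k) n = 0"
    using Q[folded Z id_Dc[OF a2 k1 ka] id_f[OF a2 k1 ka] id_d[OF a2 k1 ka] id_a[OF a2 k1 ka] id_e2[OF a2 k1 ka]] .
  have alg: "f*e*K = A*e*d + f*Z*c + A*Z*Dc" if "Z*c - K*e + A*a = 0" "Z*Dc - a*f + e*d = 0"
    for Z c K e A a Dc f d :: 'a
  proof -
    have "f*e*K - (A*e*d + f*Z*c + A*Z*Dc) = - f*(Z*c - K*e + A*a) - A*(Z*Dc - a*f + e*d)"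
      by (simp add: algebra_simps)
    then show ?thesis using that by simp
  qed
  show ?thesis by (rule alg[OF P' Q'])
qed


lemma prodv:
  fixes r1 :: "int \<Rightarrow> 'a::field"
  assumes nz': "\<And>a n. rdet r1 a n \<noteq> 0"
  shows "(\<Prod>k=1..\<alpha>. vq r1 k n) = rdet r1 \<alpha> n"
proof (induction \<alpha>)
  case 0 then show ?case by (simp add: rdet_def)
next
  case (Suc a)
  have "(\<Prod>k=1..Suc a. vq r1 k n) = vq r1 (Suc a) n * (\<Prod>k=1..a. vq r1 k n)"
    by (subst prod.nat_ivl_Suc') auto
  also have "\<dots> = rdet r1 (Suc a) n" using Suc nz'[of a n] by (simp add: vq_def)
  finally show ?case .
qed

theorem mainTheorem5:
  fixes r1 :: "int \<Rightarrow> 'a::field"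
  assumes nz: "\<And>\<alpha> n. \<alpha> \<ge> 1 \<Longrightarrow> rdet r1 \<alpha> n \<noteq> 0"
  shows "(\<forall>\<alpha>::nat. \<forall>m::int. \<forall>n::int. \<alpha> \<ge> 2 \<longrightarrow> 0 \<le> m \<longrightarrow> m \<le> int \<alpha> \<longrightarrow>
            Cn r1 \<alpha> m n = Cn r1 (\<alpha> - 1) m n
              + yw r1 (2*\<alpha> - 1) n * Cn r1 (\<alpha> - 1) (m - 1) n
              + yw r1 (2*\<alpha> - 2) n * Cn r1 (\<alpha> - 2) (m - 1) n)
       \<and> (\<forall>\<alpha>::nat. \<forall>n::int. Cn r1 \<alpha> 0 n = 1)"
proof -
  have nz': "rdet r1 a n \<noteq> 0" for a n
    using nz[of a n] by (cases "a = 0") (auto simp: rdet_def)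
  have Cn_eq: "Cn r1 a m n = cdet r1 a m n / rdet r1 a n" for a m n
    unfolding Cn_def prodv[OF nz'] ..
  have c0: "cdet r1 a 0 n = rdet r1 a n" for a n
  proof (cases "a = 0")
    case True then show ?thesis by (simp add: cdet_def rdet_def)
  next
    case False
    then have "0 < a" by simp
    then show ?thesis using cdet_top[of a a r1 n] rdet_top[of a r1 n] by simp
  qed
  have part2: "Cn r1 a 0 n = 1" for a n
    unfolding Cn_eq c0 using nz'[of a n] by simp
  have part1: "Cn r1 \<alpha> m n = Cn r1 (\<alpha> - 1) m n
              + yw r1 (2*\<alpha> - 1) n * Cn r1 (\<alpha> - 1) (m - 1) n
              + yw r1 (2*\<alpha> - 2) n * Cn r1 (\<alpha> - 2) (m - 1) n"
    if a2: "\<alpha> \<ge> 2" and m0: "0 \<le> m" and ma: "m \<le> int \<alpha>" for \<alpha> m n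
  proof -
    have y1: "yw r1 (2*\<alpha> - 1) n = vq r1 \<alpha> (n+1) / vq r1 \<alpha> n"
    proof -
      have "odd (2*\<alpha> - 1)" using a2 by simp
      moreover have "(2*\<alpha> - 1 + 1) div 2 = \<alpha>" using a2 by simp
      ultimately show ?thesis unfolding yw_def by simp
    qed
    have y2: "yw r1 (2*\<alpha> - 2) n = vq r1 \<alpha> (n+1) / vq r1 (\<alpha>-1) n"
    proof -
      have "even (2*\<alpha> - 2)" using a2 by simp
      moreover have "(2*\<alpha> - 2) div 2 = \<alpha> - 1" using a2 by simp
      ultimately show ?thesis unfolding yw_def using a2 by simp
    qed
    have v: "vq r1 b q = rdet r1 b q / rdet r1 (b-1) q" for b q unfolding vq_def ..
    have e21: "\<alpha> - 1 - 1 = \<alpha> - 2" by simp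
    note nzs = nz'[of \<alpha> n] nz'[of \<alpha> "n+1"] nz'[of "\<alpha>-1" n] nz'[of "\<alpha>-1" "n+1"] nz'[of "\<alpha>-2" n]
    show ?thesis
    proof (cases "m = 0")
      case True
      have z: "Cn r1 b (-1) n = 0" for b by (simp add: Cn_eq cdet_def)
      show ?thesis using part2[of \<alpha> n] part2[of "\<alpha>-1" n] z True by simp
    next
      case False
      show ?thesis
      proof (cases "m = int \<alpha>")
        case True
        have cA: "cdet r1 \<alpha> m n = rdet r1 \<alpha> (n+1)"
          using cdet_top[of \<alpha> 0 r1 n] rdet_top1[of \<alpha> r1 n] a2 True by simp
        have cA1: "cdet r1 (\<alpha>-1) (m-1) n = rdet r1 (\<alpha>-1) (n+1)"
          using cdet_top[of "\<alpha>-1" 0 r1 n] rdet_top1[of "\<alpha>-1" r1 n] a2 True by (simp add: of_nat_diff)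
        have z1: "cdet r1 (\<alpha>-1) m n = 0" using True a2 by (simp add: cdet_def)
        have z2: "cdet r1 (\<alpha>-2) (m-1) n = 0" using True a2 by (simp add: cdet_def)
        show ?thesis unfolding Cn_eq cA cA1 z1 z2 y1 y2 v using nzs
          by (simp add: field_simps)
      next
        case False2: False
        define k where "k = \<alpha> - nat m"
        have k1: "1 \<le> k" and ka: "k < \<alpha>" using False False2 m0 ma unfolding k_def by auto
        have mk: "m = int \<alpha> - int k" using m0 ma unfolding k_def by auto
        note PI = poly_id[OF a2 k1 ka, of r1 n, folded mk]
        show ?thesis unfolding Cn_eq y1 y2 v e21 using nzs PI
          by (simp add: field_simps)
      qed
    qed
  qed
  show ?thesis using part1 part2 by blast
qed

end
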